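(* Let $\mathcal V$, $\mathcal W$, $\mathcal Z$ be complex Hilbert spaces and let $R:\mathcal Z\supset\operatorname{dom}R\to\mathcal V\times\mathcal W$ be a linear operator. Let $P_{\mathcal V}$ and $P_{\mathcal W}$ denote the canonical projections of $\mathcal V\times\mathcal W$ onto $\mathcal V$ and $\mathcal W$, and regard $P_{\mathcal V}R$ and $P_{\mathcal W}R$ as operators with domain $\operatorname{dom}R$. Then the following statements are equivalent: (i) $R$ is closed, and $P_{\mathcal V}R$ is closed with domain $\operatorname{dom}(P_{\mathcal V}R)=\operatorname{dom}R$; (ii) $P_{\mathcal V}R$ is closed with domain $\operatorname{dom}(P_{\mathcal V}R)=\operatorname{dom}R$, and $P_{\mathcal W}R\in L(\operatorname{dom}(P_{\mathcal V}R),\mathcal W)$; (iii) $R$ is closed, and $P_{\mathcal W}R\in L(\operatorname{dom}(P_{\mathcal V}R),\mathcal W)$.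
   Context: Here $\operatorname{dom}(P_{\mathcal V}R)=\operatorname{dom}R$ is equipped with the graph norm $\|z\|=(\|z\|_{\mathcal Z}^2+\|P_{\mathcal V}Rz\|_{\mathcal V}^2)^{1/2}$, and $L(\cdot,\cdot)$ denotes the space of bounded linear operators. *)

theory Defs
  imports "HOL-Analysis.Analysis"
begin

text \<open>A complex Hilbert space is modelled as a real Hilbert space (type class
  real_inner + complete_space, the realification) together with a complex
  structure J (multiplication by the imaginary unit): J is real-linear,
  J (J x) = - x, and J preserves the real inner product.  The complex inner
  product is then  inner x y + i * inner x (J y).\<close>

definition complex_structure :: "('a::real_inner \<Rightarrow> 'a) \<Rightarrow> bool" where
  "complex_structure J \<longleftrightarrow> linear J \<and> (\<forall>x. J (J x) = - x) \<and> (\<forall>x y. inner (J x) (J y) = inner x y)"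

definition lin_op ::
  "('a::real_vector \<Rightarrow> 'a) \<Rightarrow> ('b::real_vector \<Rightarrow> 'b) \<Rightarrow> 'a set \<Rightarrow> ('a \<Rightarrow> 'b) \<Rightarrow> bool" where
  "lin_op Ja Jb D T \<longleftrightarrow>
     subspace D \<and> (\<forall>x\<in>D. Ja x \<in> D) \<and>
     (\<forall>x\<in>D. \<forall>y\<in>D. T (x + y) = T x + T y) \<and>
     (\<forall>x\<in>D. \<forall>c::real. T (c *\<^sub>R x) = c *\<^sub>R T x) \<and>
     (\<forall>x\<in>D. T (Ja x) = Jb (T x))"

definition graph_op :: "'a set \<Rightarrow> ('a \<Rightarrow> 'b) \<Rightarrow> ('a \<times> 'b) set" where
  "graph_op D T = {(x, T x) | x. x \<in> D}"

definition closed_op :: "'a::topological_space set \<Rightarrow> ('a \<Rightarrow> 'b::topological_space) \<Rightarrow> bool" where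
  "closed_op D T \<longleftrightarrow> closed (graph_op D T)"

definition graph_norm :: "('a::real_normed_vector \<Rightarrow> 'b::real_normed_vector) \<Rightarrow> 'a \<Rightarrow> real" where
  "graph_norm A z = sqrt ((norm z)\<^sup>2 + (norm (A z))\<^sup>2)"

text \<open>B \<in> L(dom A, Y), where dom A = D carries the graph norm of A:
  B is (complex-)linear on D and bounded with respect to the graph norm of A.\<close>

definition bounded_wrt_graph ::
  "('a::real_normed_vector \<Rightarrow> 'a) \<Rightarrow> ('c::real_normed_vector \<Rightarrow> 'c) \<Rightarrow> 'a set \<Rightarrow>
   ('a \<Rightarrow> 'b::real_normed_vector) \<Rightarrow> ('a \<Rightarrow> 'c) \<Rightarrow> bool" where
  "bounded_wrt_graph Ja Jc D A B \<longleftrightarrow>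
     lin_op Ja Jc D B \<and> (\<exists>C. \<forall>z\<in>D. norm (B z) \<le> C * graph_norm A z)"

end

theory Submission
  imports Defs
begin

lemma closed_graph_bounded:
  fixes X :: "'a::{real_normed_vector, complete_space} set"
    and T :: "'a \<Rightarrow> 'b::{real_normed_vector, complete_space}"
  assumes sub: "subspace X" and clX: "closed X"
    and add: "\<And>x y. x \<in> X \<Longrightarrow> y \<in> X \<Longrightarrow> T (x + y) = T x + T y"
    and scal: "\<And>x c. x \<in> X \<Longrightarrow> T (c *\<^sub>R x) = c *\<^sub>R T x"
    and clG: "closed {(x, T x) | x. x \<in> X}"
  shows "\<exists>C. \<forall>x\<in>X. norm (T x) \<le> C * norm x"
proof -
  have cm: "completely_metrizable_space (top_of_set X)"
    using completely_metrizable_space_closedin[OF completely_metrizable_space_euclidean] closed_closedin clX by blast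
  define A where "A n = closure {x\<in>X. norm (T x) \<le> real n}" for n :: nat
  have AX: "A n \<subseteq> X" for n
    unfolding A_def using clX by (intro closure_minimal) auto
  have clA: "closedin (top_of_set X) (A n)" for n
    using AX by (intro closed_subset) (auto simp: A_def)
  have UN: "\<Union>(range A) = X"
  proof
    show "\<Union>(range A) \<subseteq> X" using AX by blast
    show "X \<subseteq> \<Union>(range A)"
    proof
      fix x assume "x \<in> X"
      obtain n :: nat where "norm (T x) \<le> real n" by (meson real_arch_simple)
      then have "x \<in> {x\<in>X. norm (T x) \<le> real n}" using \<open>x \<in> X\<close> by simp
      then have "x \<in> A n" unfolding A_def using closure_subset by (rule subsetD[rotated])
      then show "x \<in> \<Union>(range A)" by blast
    qed
  qed
  have "\<exists>n. (top_of_set X) interior_of A n \<noteq> {}"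
  proof (rule ccontr)
    assume nb: "\<not> ?thesis"
    have "(top_of_set X) interior_of \<Union>(range A) = {}"
    proof (rule Baire_category_alt)
      show "completely_metrizable_space (top_of_set X) \<or> locally_compact_space (top_of_set X) \<and> regular_space (top_of_set X)"
        using cm by (rule disjI1)
      show "countable (range A)" by simp
      fix S assume "S \<in> range A"
      then obtain m where "S = A m" by (rule rangeE)
      then show "closedin (top_of_set X) S \<and> (top_of_set X) interior_of S = {}"
        using clA nb by simp
    qed
    moreover have "0 \<in> X" using sub by (simp add: subspace_0)
    ultimately show False using UN interior_of_topspace[of "top_of_set X"] by simp
  qed
  then obtain n x0 where x0: "x0 \<in> (top_of_set X) interior_of A n" by blast
  then obtain r where r: "r > 0" "ball x0 r \<inter> X \<subseteq> (top_of_set X) interior_of A n"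
  proof -
    have "openin (top_of_set X) ((top_of_set X) interior_of A n)" by (rule openin_interior_of)
    then have "\<forall>x\<in>(top_of_set X) interior_of A n. \<exists>e. 0 < e \<and> ball x e \<inter> X \<subseteq> (top_of_set X) interior_of A n"
      unfolding openin_contains_ball by (rule conjunct2)
    from bspec[OF this x0] show ?thesis using that by blast
  qed
  have rA: "ball x0 r \<inter> X \<subseteq> A n" using r(2) interior_of_subset[of "top_of_set X" "A n"] by (rule order_trans)
  have x0X: "x0 \<in> X" using interior_of_subset[of "top_of_set X" "A n"] x0 AX[of n] by (meson subsetD)

  have X0: "0 \<in> X" using sub by (simp add: subspace_0)
  have T0: "T 0 = 0" using scal[OF X0, of 0] by simp
  have Tdiff: "T (a - b) = T a - T b" if "a \<in> X" "b \<in> X" for a b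
  proof -
    have "(-1) *\<^sub>R b \<in> X" using sub that by (simp add: subspace_neg)
    then have "T (a + (-1) *\<^sub>R b) = T a + T ((-1) *\<^sub>R b)" using add that by blast
    then show ?thesis using scal[OF that(2), of "-1"] by simp
  qed
  have half: "\<exists>y\<in>X. norm (T y) \<le> real n \<and> norm (x - y) < e"
    if x: "x \<in> X" "norm x < r" and e: "e > 0" for x e
  proof -
    have "x0 + x \<in> ball x0 r \<inter> X" using x x0X sub by (simp add: subspace_add dist_norm)
    then have "x0 + x \<in> closure {x\<in>X. norm (T x) \<le> real n}" using rA A_def by blast
    then obtain ya where ya: "ya \<in> X" "norm (T ya) \<le> real n" "dist ya (x0 + x) < e"
      using e unfolding closure_approachable by blast
    have "x0 - x \<in> ball x0 r \<inter> X" using x x0X sub by (simp add: subspace_diff dist_norm)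
    then have "x0 - x \<in> closure {x\<in>X. norm (T x) \<le> real n}" using rA A_def by blast
    then obtain yb where yb: "yb \<in> X" "norm (T yb) \<le> real n" "dist yb (x0 - x) < e"
      using e unfolding closure_approachable by blast
    define y where "y = (1/2) *\<^sub>R (ya - yb)"
    have yX: "y \<in> X" using ya yb sub by (simp add: y_def subspace_diff subspace_scale)
    have "T y = (1/2) *\<^sub>R (T ya - T yb)"
      using ya yb sub by (simp add: y_def scal subspace_diff Tdiff)
    then have "norm (T y) \<le> (1/2) * (norm (T ya) + norm (T yb))"
      by (simp add: norm_triangle_ineq4)
    also have "\<dots> \<le> real n" using ya yb by simp
    finally have 1: "norm (T y) \<le> real n" .
    have eq: "x - y = (1/2) *\<^sub>R ((x0 + x - ya) - (x0 - x - yb))"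
      by (simp add: y_def algebra_simps) (metis scaleR_add_left field_sum_of_halves scaleR_one)
    have "norm (x - y) = (1/2) * norm ((x0 + x - ya) - (x0 - x - yb))"
      unfolding eq norm_scaleR by simp
    also have "\<dots> \<le> (1/2) * (norm (x0 + x - ya) + norm (x0 - x - yb))"
      by (rule mult_left_mono[OF norm_triangle_ineq4]) simp
    also have "\<dots> < e" using ya yb by (simp add: dist_norm norm_minus_commute)
    finally show ?thesis using yX 1 by blast
  qed
  define M where "M = 2 * real n / r"
  have M0: "M \<ge> 0" using r by (simp add: M_def)
  have approx: "\<exists>y. y \<in> X \<and> norm (T y) \<le> M * norm x \<and> norm (x - y) < e"
    if x: "x \<in> X" and e: "e > 0" for x e
  proof (cases "x = 0")
    case True
    then show ?thesis using X0 T0 e by (intro exI[of _ 0]) auto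
  next
    case False
    define s where "s = r / (2 * norm x)"
    have s: "s > 0" using False r by (simp add: s_def)
    have "norm (s *\<^sub>R x) < r" using False r s by (simp add: s_def)
    moreover have "s *\<^sub>R x \<in> X" using x sub by (simp add: subspace_scale)
    ultimately obtain y where y: "y \<in> X" "norm (T y) \<le> real n" "norm (s *\<^sub>R x - y) < s * e"
      using half s e by (meson mult_pos_pos)
    define y' where "y' = (1/s) *\<^sub>R y"
    have "y' \<in> X" using y sub by (simp add: y'_def subspace_scale)
    moreover have "norm (T y') \<le> M * norm x"
    proof -
      have "norm (T y') = norm (T y) / s" using y s by (simp add: y'_def scal)
      also have "\<dots> \<le> real n / s" using y s by (simp add: divide_right_mono)
      also have "\<dots> = M * norm x" using False r by (simp add: s_def M_def field_simps)
      finally show ?thesis .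
    qed
    moreover have "norm (x - y') < e"
    proof -
      have "x - y' = (1/s) *\<^sub>R (s *\<^sub>R x - y)" using s by (simp add: y'_def algebra_simps)
      then have "norm (x - y') = norm (s *\<^sub>R x - y) / s" using s by simp
      also have "\<dots> < e" using y s by (simp add: divide_less_eq mult.commute)
      finally show ?thesis .
    qed
    ultimately show ?thesis by blast
  qed
  define g where "g x e = (SOME y. y \<in> X \<and> norm (T y) \<le> M * norm x \<and> norm (x - y) < e)" for x e
  have g: "g x e \<in> X \<and> norm (T (g x e)) \<le> M * norm x \<and> norm (x - g x e) < e"
    if "x \<in> X" "e > 0" for x e
    unfolding g_def using someI_ex[OF approx[OF that]] .
  have main: "norm (T x) \<le> 2 * M * (norm x + d)" if x: "x \<in> X" and d: "d > 0" for x d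
  proof -
    define c where "c k = (norm x + d) * (1/2) ^ k" for k :: nat
    have cpos: "c k > 0" for k using d unfolding c_def by (intro mult_pos_pos add_nonneg_pos) (simp_all add: d)
    define u where "u = rec_nat x (\<lambda>k v. v - g v (c (Suc k)))"
    have u0: "u 0 = x" and uS: "u (Suc k) = u k - g (u k) (c (Suc k))" for k
      by (simp_all add: u_def)
    have inv: "u k \<in> X \<and> norm (u k) \<le> c k" for k
    proof (induction k)
      case 0 then show ?case using x d by (simp add: u0 c_def)
    next
      case (Suc k)
      then have "g (u k) (c (Suc k)) \<in> X" "norm (u k - g (u k) (c (Suc k))) < c (Suc k)"
        using g cpos by blast+
      then show ?case using Suc sub by (simp add: uS subspace_diff)
    qed
    define y where "y k = g (u k) (c (Suc k))" for k
    have yX: "y k \<in> X" for k using g inv cpos by (simp add: y_def)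
    have Ty: "norm (T (y k)) \<le> M * c k" for k
    proof -
      have "norm (T (y k)) \<le> M * norm (u k)" using g inv cpos by (simp add: y_def)
      also have "\<dots> \<le> M * c k" using inv M0 by (simp add: mult_left_mono)
      finally show ?thesis .
    qed
    have psum: "(\<Sum>k<N. y k) = x - u N" for N
      by (induction N) (simp_all add: u0 uS y_def)
    have Tsum: "T (\<Sum>k<N. y k) = (\<Sum>k<N. T (y k))" for N
    proof (induction N)
      case 0 then show ?case using T0 by simp
    next
      case (Suc N)
      have "(\<Sum>k<N. y k) \<in> X" using yX sub by (simp add: subspace_sum)
      then show ?case using Suc add yX by simp
    qed
    have sc: "summable c" unfolding c_def
      by (intro summable_mult summable_geometric) simp
    define a where "a k = M * c k" for k
    have sa: "summable a" unfolding a_def using sc by (rule summable_mult)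
    have a0: "a k \<ge> 0" for k using M0 cpos by (simp add: a_def less_imp_le)
    define S where "S N = (\<Sum>k<N. T (y k))" for N
    define A where "A N = (\<Sum>k<N. a k)" for N
    have SA1: "norm (S m - S n) \<le> \<bar>A m - A n\<bar>" if "n \<le> m" for m n
    proof -
      have "S m - S n = (\<Sum>k\<in>{n..<m}. T (y k))"
        unfolding S_def lessThan_atLeast0 using that by (simp add: sum_diff_nat_ivl)
      moreover have "A m - A n = (\<Sum>k\<in>{n..<m}. a k)"
        unfolding A_def lessThan_atLeast0 using that by (simp add: sum_diff_nat_ivl)
      moreover have "norm (\<Sum>k\<in>{n..<m}. T (y k)) \<le> (\<Sum>k\<in>{n..<m}. a k)"
        using Ty by (intro sum_norm_le) (simp add: a_def)
      ultimately show ?thesis by simp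
    qed
    have SA: "norm (S m - S n) \<le> \<bar>A m - A n\<bar>" for m n
    proof (cases "n \<le> m")
      case True then show ?thesis by (rule SA1)
    next
      case False
      then have "norm (S n - S m) \<le> \<bar>A n - A m\<bar>" by (intro SA1) simp
      then show ?thesis by (simp add: norm_minus_commute abs_minus_commute)
    qed
    have "convergent A" unfolding A_def using sa by (simp add: summable_iff_convergent)
    then have "Cauchy A" by (rule convergent_Cauchy)
    have "Cauchy S"
    proof (rule CauchyI)
      fix e :: real assume "e > 0"
      then obtain K where K: "\<forall>m\<ge>K. \<forall>n\<ge>K. norm (A m - A n) < e"
        using \<open>Cauchy A\<close> unfolding Cauchy_iff by blast
      show "\<exists>K. \<forall>m\<ge>K. \<forall>n\<ge>K. norm (S m - S n) < e"
      proof (intro exI allI impI)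
        fix m n assume "m \<ge> K" "n \<ge> K"
        then have "norm (A m - A n) < e" using K by blast
        then show "norm (S m - S n) < e" using SA[of m n] by simp
      qed
    qed
    then obtain L where limS: "S \<longlonglongrightarrow> L" using Cauchy_convergent convergent_def by blast
    have limT: "(\<lambda>N. T (x - u N)) \<longlonglongrightarrow> L"
    proof -
      have "(\<lambda>N. T (x - u N)) = S" unfolding S_def by (rule ext) (metis psum Tsum)
      then show ?thesis using limS by simp
    qed
    have c0: "c \<longlonglongrightarrow> 0" unfolding c_def
      by (intro tendsto_mult_right_zero LIMSEQ_power_zero) simp
    have "u \<longlonglongrightarrow> 0"
      using inv by (intro Lim_null_comparison[OF _ c0]) simp
    then have limx: "(\<lambda>N. x - u N) \<longlonglongrightarrow> x"
      using tendsto_diff[OF tendsto_const[of x]] by fastforce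
    have "(x, L) \<in> {(x, T x) | x. x \<in> X}"
    proof (rule closed_sequentially[OF clG])
      show "(x - u N, T (x - u N)) \<in> {(x, T x) | x. x \<in> X}" for N
        using inv x sub by (auto simp: subspace_diff)
      show "(\<lambda>N. (x - u N, T (x - u N))) \<longlonglongrightarrow> (x, L)"
        using limx limT by (rule tendsto_Pair)
    qed
    then have TL: "T x = L" by auto
    have sumc: "(\<Sum>k. c k) = (norm x + d) * 2"
    proof -
      have "(\<Sum>k. (1/2::real) ^ k) = 2" using suminf_geometric[of "1/2::real"] by simp
      then show ?thesis unfolding c_def
        using suminf_mult[OF summable_geometric[of "1/2::real"], of "norm x + d"] by simp
    qed
    have bnd: "norm (S N) \<le> 2 * M * (norm x + d)" for N
    proof -
      have "norm (S N) \<le> A N" unfolding S_def A_def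
        using Ty by (intro sum_norm_le) (simp add: a_def)
      also have "\<dots> \<le> suminf a" unfolding A_def using sa a0 by (intro sum_le_suminf) auto
      also have "suminf a = M * (\<Sum>k. c k)" unfolding a_def using sc by (simp add: suminf_mult)
      finally show ?thesis using sumc by (simp add: algebra_simps)
    qed
    have "norm L \<le> 2 * M * (norm x + d)"
      using tendsto_norm[OF limS] bnd by (intro tendsto_upperbound) auto
    then show ?thesis using TL by simp
  qed
  show ?thesis
  proof (intro exI ballI)
    fix x assume x: "x \<in> X"
    show "norm (T x) \<le> 2 * M * norm x"
    proof (rule field_le_epsilon)
      fix e :: real assume e: "e > 0"
      define d where "d = e / (2 * M + 1)"
      have d: "d > 0" using e M0 by (simp add: d_def)
      have "2 * M * d \<le> e" using e M0 by (simp add: d_def field_simps)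
      then show "norm (T x) \<le> 2 * M * norm x + e"
        using main[OF x d] by (simp add: algebra_simps)
    qed
  qed
qed

lemma graph_op_iff: "p \<in> graph_op D T \<longleftrightarrow> fst p \<in> D \<and> snd p = T (fst p)"
  by (cases p) (auto simp: graph_op_def)

theorem lemma2p3:
  fixes JV :: "'v::{real_inner, complete_space} \<Rightarrow> 'v"
    and JW :: "'w::{real_inner, complete_space} \<Rightarrow> 'w"
    and JZ :: "'z::{real_inner, complete_space} \<Rightarrow> 'z"
    and D :: "'z set"
    and R :: "'z \<Rightarrow> 'v \<times> 'w"
  assumes "complex_structure JV" and "complex_structure JW" and "complex_structure JZ"
    and "lin_op JZ (\<lambda>p. (JV (fst p), JW (snd p))) D R"
  shows "((closed_op D R \<and> closed_op D (fst \<circ> R))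
            \<longleftrightarrow> (closed_op D (fst \<circ> R) \<and> bounded_wrt_graph JZ JW D (fst \<circ> R) (snd \<circ> R)))
       \<and> ((closed_op D (fst \<circ> R) \<and> bounded_wrt_graph JZ JW D (fst \<circ> R) (snd \<circ> R))
            \<longleftrightarrow> (closed_op D R \<and> bounded_wrt_graph JZ JW D (fst \<circ> R) (snd \<circ> R)))"
proof -
  note L = assms(4)[unfolded lin_op_def]
  have subD: "subspace D" using L by blast
  have JD: "\<And>x. x \<in> D \<Longrightarrow> JZ x \<in> D" using L by blast
  have Radd: "\<And>x y. x \<in> D \<Longrightarrow> y \<in> D \<Longrightarrow> R (x + y) = R x + R y" using L by blast
  have Rscal: "\<And>x c. x \<in> D \<Longrightarrow> R (c *\<^sub>R x) = c *\<^sub>R R x" using L by blast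
  have RJ: "\<And>x. x \<in> D \<Longrightarrow> R (JZ x) = (JV (fst (R x)), JW (snd (R x)))" using L by blast
  define F where "F = fst \<circ> R"
  define H where "H = snd \<circ> R"
  have D0: "0 \<in> D" using subD by (simp add: subspace_0)
  have Rdiff: "R (a - b) = R a - R b" if "a \<in> D" "b \<in> D" for a b
  proof -
    have "(-1) *\<^sub>R b \<in> D" using subD that by (simp add: subspace_neg)
    then have "R (a + (-1) *\<^sub>R b) = R a + R ((-1) *\<^sub>R b)" using Radd that by blast
    then show ?thesis using Rscal[OF that(2), of "-1"] by simp
  qed
  have Fdiff: "F (a - b) = F a - F b" and Hdiff: "H (a - b) = H a - H b" if "a \<in> D" "b \<in> D" for a b
    using Rdiff[OF that] by (simp_all add: F_def H_def)
  have linH: "lin_op JZ JW D H"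
    unfolding lin_op_def H_def using subD JD Radd Rscal RJ by simp
  have gn: "graph_norm F z = norm (z, F z)" for z
    by (simp add: graph_norm_def norm_Pair)
  have pdiff: "(a, F a) - (b, F b) = (a - b, F (a - b))" if "a \<in> D" "b \<in> D" for a b
    using Fdiff[OF that] by simp
  have a: "bounded_wrt_graph JZ JW D F H" if cR: "closed_op D R" and cF: "closed_op D F"
  proof -
    define X where "X = graph_op D F"
    have X_iff: "p \<in> X \<longleftrightarrow> fst p \<in> D \<and> snd p = F (fst p)" for p
      by (cases p) (auto simp: X_def graph_op_def)
    have X0': "0 \<in> X" using D0 Rscal[OF D0, of 0] by (simp add: F_def X_iff)
    have Xadd: "x + y \<in> X" if "x \<in> X" "y \<in> X" for x y
      using that subD Radd by (simp add: X_iff subspace_add F_def)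
    have Xscal: "c *\<^sub>R x \<in> X" if "x \<in> X" for x c
      using that subD Rscal by (simp add: X_iff subspace_scale F_def)
    have subX: "subspace X"
      unfolding subspace_def using X0' Xadd Xscal by blast
    have clX: "closed X" using cF by (simp add: X_def closed_op_def)
    define T where "T p = H (fst p)" for p :: "'z \<times> 'v"
    have "closed {(p, T p) | p. p \<in> X}"
    proof -
      have "{(p, T p) | p. p \<in> X} = (\<lambda>q. (fst (fst q), (snd (fst q), snd q))) -` graph_op D R"
        by (auto simp: X_iff T_def graph_op_def F_def H_def) (metis fst_conv snd_conv)+
      moreover have "closed ((\<lambda>q. (fst (fst q), (snd (fst q), snd q))) -` graph_op D R)"
        using cR unfolding closed_op_def
        by (intro continuous_closed_vimage) (auto intro!: continuous_intros)
      ultimately show ?thesis by simp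
    qed
    then obtain C where C: "\<forall>p\<in>X. norm (T p) \<le> C * norm p"
      using closed_graph_bounded[OF subX clX, of T] subD Radd Rscal
      by (auto simp: X_iff T_def H_def subspace_add subspace_scale)
    have "\<forall>z\<in>D. norm (H z) \<le> C * graph_norm F z"
    proof
      fix z assume "z \<in> D"
      then have "(z, F z) \<in> X" by (simp add: X_iff)
      then show "norm (H z) \<le> C * graph_norm F z" using C unfolding T_def gn by (metis fst_conv)
    qed
    then show ?thesis using linH by (auto simp: bounded_wrt_graph_def)
  qed
  have Hb: "\<exists>C. \<forall>a\<in>D. \<forall>b\<in>D. norm (H a - H b) \<le> C * norm ((a, F a) - (b, F b))"
    if B: "bounded_wrt_graph JZ JW D F H"
  proof -
    obtain C where C: "\<forall>z\<in>D. norm (H z) \<le> C * graph_norm F z"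
      using B by (auto simp: bounded_wrt_graph_def)
    show ?thesis
    proof (intro exI ballI)
      fix a b assume ab: "a \<in> D" "b \<in> D"
      then have "a - b \<in> D" using subD by (simp add: subspace_diff)
      then have "norm (H (a - b)) \<le> C * norm (a - b, F (a - b))"
        using C unfolding gn by blast
      then show "norm (H a - H b) \<le> C * norm ((a, F a) - (b, F b))"
        by (simp only: Hdiff[OF ab] pdiff[OF ab])
    qed
  qed
  have b: "closed_op D R" if cF: "closed_op D F" and B: "bounded_wrt_graph JZ JW D F H"
  proof -
    obtain C where C: "\<forall>a\<in>D. \<forall>b\<in>D. norm (H a - H b) \<le> C * norm ((a, F a) - (b, F b))"
      using Hb[OF B] by blast
    show ?thesis unfolding closed_op_def closed_sequential_limits
    proof (intro allI impI, elim conjE)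
      fix s and l :: "'z \<times> 'v \<times> 'w"
      assume sG: "\<forall>n. s n \<in> graph_op D R" and sl: "s \<longlonglongrightarrow> l"
      define z where "z n = fst (s n)" for n
      have zD: "z n \<in> D" and sz: "s n = (z n, R (z n))" for n
        using sG[rule_format, of n] by (auto simp: graph_op_def z_def)
      obtain z0 v w where l: "l = (z0, v, w)" by (cases l) auto
      have lim1: "(\<lambda>n. (z n, F (z n))) \<longlonglongrightarrow> (z0, v)"
      proof -
        have "(\<lambda>n. (fst (s n), fst (snd (s n)))) \<longlonglongrightarrow> (fst l, fst (snd l))"
          using sl by (intro tendsto_intros)
        moreover have "(\<lambda>n. (fst (s n), fst (snd (s n)))) = (\<lambda>n. (z n, F (z n)))"
          by (simp add: sz F_def)
        ultimately show ?thesis using l by simp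
      qed
      have "(z0, v) \<in> graph_op D F"
        by (rule closed_sequentially[OF cF[unfolded closed_op_def] _ lim1]) (simp add: graph_op_iff zD)
      then have z0: "z0 \<in> D" "v = F z0" unfolding graph_op_iff by simp_all
      have limw: "(\<lambda>n. H (z n)) \<longlonglongrightarrow> w"
      proof -
        have "(\<lambda>n. snd (snd (s n))) \<longlonglongrightarrow> snd (snd l)"
          using sl by (intro tendsto_intros)
        moreover have "(\<lambda>n. snd (snd (s n))) = (\<lambda>n. H (z n))"
          by (simp add: sz H_def)
        ultimately show ?thesis using l by simp
      qed
      have "(\<lambda>n. (z n, F (z n)) - (z0, F z0)) \<longlonglongrightarrow> 0"
        using lim1 z0 by (intro LIM_zero) simp
      then have t0: "(\<lambda>n. C * norm ((z n, F (z n)) - (z0, F z0))) \<longlonglongrightarrow> 0"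
        by (intro tendsto_mult_right_zero tendsto_norm_zero)
      have ev: "\<forall>n. norm (H (z n) - H z0) \<le> C * norm ((z n, F (z n)) - (z0, F z0))"
        by (intro allI C[rule_format, OF zD z0(1)])
      have "(\<lambda>n. H (z n) - H z0) \<longlonglongrightarrow> 0"
        by (rule Lim_null_comparison[OF always_eventually[OF ev] t0])
      then have "(\<lambda>n. H (z n)) \<longlonglongrightarrow> H z0" by (rule LIM_zero_cancel)
      then have "w = H z0" by (rule LIMSEQ_unique[OF limw])
      then have "R z0 = (v, w)" using z0(2) by (simp add: F_def H_def prod_eq_iff)
      then show "l \<in> graph_op D R" unfolding l graph_op_iff using z0(1) by simp
    qed
  qed
  have c: "closed_op D F" if cR: "closed_op D R" and B: "bounded_wrt_graph JZ JW D F H"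
  proof -
    obtain C where C: "\<forall>a\<in>D. \<forall>b\<in>D. norm (H a - H b) \<le> C * norm ((a, F a) - (b, F b))"
      using Hb[OF B] by blast
    show ?thesis unfolding closed_op_def closed_sequential_limits
    proof (intro allI impI, elim conjE)
      fix s and l :: "'z \<times> 'v"
      assume sG: "\<forall>n. s n \<in> graph_op D F" and sl: "s \<longlonglongrightarrow> l"
      define z where "z n = fst (s n)" for n
      have zD: "z n \<in> D" and sz: "s n = (z n, F (z n))" for n
        using sG[rule_format, of n] by (auto simp: graph_op_def z_def)
      obtain z0 v where l: "l = (z0, v)" by (cases l) auto
      have "Cauchy s" using sl by (rule LIMSEQ_imp_Cauchy)
      have "Cauchy (\<lambda>n. H (z n))"
      proof (rule CauchyI)
        fix e :: real assume e: "e > 0"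
        then have "e / (\<bar>C\<bar> + 1) > 0" by simp
        then obtain K where K: "\<forall>m\<ge>K. \<forall>n\<ge>K. norm (s m - s n) < e / (\<bar>C\<bar> + 1)"
          using \<open>Cauchy s\<close> unfolding Cauchy_iff by blast
        show "\<exists>K. \<forall>m\<ge>K. \<forall>n\<ge>K. norm (H (z m) - H (z n)) < e"
        proof (intro exI allI impI)
          fix m n assume mn: "m \<ge> K" "n \<ge> K"
          have "norm (H (z m) - H (z n)) \<le> C * norm (s m - s n)"
            using C[rule_format, OF zD zD] by (simp only: sz)
          also have "\<dots> \<le> \<bar>C\<bar> * norm (s m - s n)" by (simp add: mult_right_mono)
          also have "\<dots> \<le> \<bar>C\<bar> * (e / (\<bar>C\<bar> + 1))"
            using K mn by (intro mult_left_mono) (auto simp: less_imp_le)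
          also have "\<dots> < e" using e by (simp add: field_simps)
          finally show "norm (H (z m) - H (z n)) < e" .
        qed
      qed
      then obtain w where limw: "(\<lambda>n. H (z n)) \<longlonglongrightarrow> w"
        using Cauchy_convergent convergent_def by blast
      have "(\<lambda>n. (z n, R (z n))) \<longlonglongrightarrow> (z0, v, w)"
      proof -
        have "(\<lambda>n. (fst (s n), snd (s n), H (z n))) \<longlonglongrightarrow> (fst l, snd l, w)"
          using sl limw by (intro tendsto_intros)
        moreover have "R (z n) = (snd (s n), H (z n))" for n
          using sz[of n] by (simp add: F_def H_def)
        ultimately show ?thesis using l by (simp add: z_def)
      qed
      then have "(z0, v, w) \<in> graph_op D R"
        by (rule closed_sequentially[OF cR[unfolded closed_op_def], rotated]) (use zD in \<open>auto simp: graph_op_def\<close>)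
      then show "l \<in> graph_op D F" using l by (auto simp: graph_op_def F_def) (metis fst_conv)
    qed
  qed
  show ?thesis
    unfolding F_def[symmetric] H_def[symmetric]
    using a b c by blast
qed

end
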